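(* Let $L\ge 18$ be even. Then \[ M_S(L,3)\le\begin{cases} L/8 & \text{if } L\equiv 0\pmod 8,\\ (L-4)/8 & \text{if } L\equiv 4\pmod 8,\\ (L+2)/8 & \text{if } L\equiv 6\pmod{24},\\ (L-2)/8 & \text{if } L\equiv 2,10,18\pmod{24},\\ (L-6)/8 & \text{if } L\equiv 14,22\pmod{24}.\end{cases} \]
   Context: $\mathcal{P}(L,\omega)$ is the set of $\omega$-element subsets of $\mathbb{Z}_L$. For $\mathcal{I}\in\mathcal{P}(L,\omega)$: $d(\mathcal{I})=\{a-b \bmod L: a,b\in\mathcal{I}\}$, $d^*(\mathcal{I})=d(\mathcal{I})\setminus\{0\}$. A strongly conflict-avoiding code (SCAC) of length $L$ and weight $\omega$ is a set $\mathcal{C}=\{\mathcal{I}_1,\dots,\mathcal{I}_M\}\subseteq\mathcal{P}(L,\omega)$ such that for all $j\ne k$, $\big(d^*(\mathcal{I}_j)\cup(d^*(\mathcal{I}_j)+1)\cup(d^*(\mathcal{I}_j)-1)\big)\cap d(\mathcal{I}_k)=\emptyset$ (shifts mod $L$). $M_S(L,\omega)$ denotes the maximum number of codewords in an SCAC of length $L$ and weight $\omega$. *)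

theory Defs
  imports Main
begin

text \<open>Z_L is represented by {0..<L} (naturals) with arithmetic mod L.\<close>

definition Pset :: "nat \<Rightarrow> nat \<Rightarrow> nat set set" where
  "Pset L w = {I. I \<subseteq> {0..<L} \<and> card I = w}"

definition dset :: "nat \<Rightarrow> nat set \<Rightarrow> nat set" where
  "dset L I = {(a + L - b) mod L | a b. a \<in> I \<and> b \<in> I}"

definition dstar :: "nat \<Rightarrow> nat set \<Rightarrow> nat set" where
  "dstar L I = dset L I - {0}"

definition is_SCAC :: "nat \<Rightarrow> nat \<Rightarrow> nat set set \<Rightarrow> bool" where
  "is_SCAC L w C \<longleftrightarrow> C \<subseteq> Pset L w \<and>
     (\<forall>I\<in>C. \<forall>J\<in>C. I \<noteq> J \<longrightarrow>
        (dstar L I \<union> (\<lambda>x. (x + 1) mod L) ` dstar L I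
                   \<union> (\<lambda>x. (x + L - 1) mod L) ` dstar L I) \<inter> dset L J = {})"

definition M_S :: "nat \<Rightarrow> nat \<Rightarrow> nat" where
  "M_S L w = Max {card C | C. is_SCAC L w C}"

end

theory Submission
  imports Defs
begin


definition D3 :: "nat \<Rightarrow> nat \<Rightarrow> nat \<Rightarrow> nat set" where
  "D3 x y z = {x, y, z, y+z, x+z, x+y}"

definition Eof :: "nat set \<Rightarrow> nat set" where
  "Eof D = D \<union> Suc ` D"

definition Csh :: "nat \<Rightarrow> nat set \<Rightarrow> bool" where
  "Csh L D \<longleftrightarrow> (\<exists>u. 3*u = L \<and> D = {u, 2*u})"
definition Bsh :: "nat \<Rightarrow> nat set \<Rightarrow> bool" where
  "Bsh L D \<longleftrightarrow> (\<exists>u. 4*u = L \<and> D = {u, 2*u, 3*u})"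
definition Ash :: "nat \<Rightarrow> nat set \<Rightarrow> bool" where
  "Ash L D \<longleftrightarrow> (\<exists>u\<in>D. 3*u = L+1 \<or> 3*u+1 = L)"

lemma D3_finite[simp]: "finite (D3 x y z)" by (simp add: D3_def)

lemma lb_list: "sorted_wrt (<) xs \<Longrightarrow> set xs \<subseteq> Eof D \<Longrightarrow> finite D \<Longrightarrow> length xs \<le> card (Eof D)"
proof -
  assume a: "sorted_wrt (<) xs" "set xs \<subseteq> Eof D" "finite D"
  have "distinct xs" using a(1) by (simp add: strict_sorted_iff)
  hence "card (set xs) = length xs" by (simp add: distinct_card)
  moreover have "card (set xs) \<le> card (Eof D)" using a by (intro card_mono) (auto simp: Eof_def)
  ultimately show ?thesis by simp
qed

lemma order_cases:
  assumes "2 \<le> (x::nat)" "x \<le> y" "y \<le> z" 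
  obtains "x < y" "y < z" "z < x+y" | "x < y" "z = x+y" | "x < y" "z > x+y"
    | "x < y" "y = z" | "x = y" "y < z" "z < x+y" | "x = y" "z = x+y" | "x = y" "z > x + y" | "x = y" "y = z"
proof (cases "x < y")
  case True
  then show ?thesis using that assms by (metis le_neq_implies_less linorder_neqE_nat)
next
  case False
  then show ?thesis using that assms by (metis le_neq_implies_less linorder_neqE_nat)
qed

lemma tri_sorted:
  assumes "2 \<le> x" "x \<le> y" "y \<le> z" "x+y+z = 2*k" "9 \<le> k"
  shows "8 \<le> card (Eof (D3 x y z)) \<or> Csh (x+y+z) (D3 x y z) \<or> Bsh (x+y+z) (D3 x y z)
     \<or> (Ash (x+y+z) (D3 x y z) \<and> 6 \<le> card (Eof (D3 x y z)))"
proof -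
  let ?D = "D3 x y z"
  from order_cases[OF assms(1-3)] show ?thesis
  proof cases
    case 1
    have "Suc z < x+y" using 1(3) assms(4) by presburger
    hence "length [x, y, z, Suc z, x+y, x+z, y+z, Suc (y+z)] \<le> card (Eof ?D)"
      by (intro lb_list) (use 1 assms in \<open>simp_all add: Eof_def D3_def\<close>)
    thus ?thesis by simp
  next
    case 2
    have "length [x, y, Suc y, z, Suc z, x+z, y+z, Suc (y+z)] \<le> card (Eof ?D)"
      by (intro lb_list) (use 2 assms in \<open>simp_all add: Eof_def D3_def\<close>)
    thus ?thesis by simp
  next
    case 3
    have "Suc (x+y) < z" using 3(2) assms(4) by presburger
    hence "length [x, y, x+y, Suc(x+y), z, x+z, y+z, Suc (y+z)] \<le> card (Eof ?D)"
      by (intro lb_list) (use 3 assms in \<open>simp_all add: Eof_def D3_def\<close>)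
    thus ?thesis by simp
  next
    case 4
    show ?thesis
    proof (cases "Suc x = y")
      case False
      have "length [x, Suc x, y, Suc y, x+y, Suc(x+y), y+z, Suc (y+z)] \<le> card (Eof ?D)"
        by (intro lb_list) (use 4 False assms in \<open>simp_all add: Eof_def D3_def\<close>)
      thus ?thesis by simp
    next
      case True
      have "length [x, y, Suc y, x+y, Suc(x+y), Suc (y+z)] \<le> card (Eof ?D)"
        by (intro lb_list) (use 4 True assms in \<open>simp_all add: Eof_def D3_def\<close>)
      moreover have "Ash (x+y+z) ?D" unfolding Ash_def D3_def using 4 True by auto
      ultimately show ?thesis by simp
    qed
  next
    case 5
    show ?thesis
    proof (cases "z = Suc x")
      case False
      have "Suc z < x+y" using 5(3) assms(4) by presburger
      hence "length [x, Suc x, z, Suc z, x+y, Suc(x+y), y+z, Suc (y+z)] \<le> card (Eof ?D)"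
        by (intro lb_list) (use 5 False assms in \<open>simp_all add: Eof_def D3_def\<close>)
      thus ?thesis by simp
    next
      case True
      have "length [x, Suc x, Suc z, x+y, Suc(x+y), Suc (y+z)] \<le> card (Eof ?D)"
        by (intro lb_list) (use 5 True assms in \<open>simp_all add: Eof_def D3_def\<close>)
      moreover have "Ash (x+y+z) ?D" unfolding Ash_def D3_def using 5 True by auto
      ultimately show ?thesis by simp
    qed
  next
    case 6
    have "Bsh (x+y+z) ?D" unfolding Bsh_def D3_def using 6
      by (intro exI[of _ x]) (auto simp: insert_commute)
    thus ?thesis by simp
  next
    case 7
    have "Suc (x+y) < z" using 7(2) assms(4) by presburger
    hence "length [x, Suc x, x+y, Suc(x+y), z, Suc z, y+z, Suc (y+z)] \<le> card (Eof ?D)"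
      by (intro lb_list) (use 7 assms in \<open>simp_all add: Eof_def D3_def\<close>)
    thus ?thesis by simp
  next
    case 8
    have "Csh (x+y+z) ?D" unfolding Csh_def D3_def using 8
      by (intro exI[of _ x]) (auto simp: insert_commute)
    thus ?thesis by simp
  qed
qed

lemma eq_list: "sorted_wrt (<) xs \<Longrightarrow> set xs \<subseteq> Eof D \<Longrightarrow> finite D \<Longrightarrow> card (Eof D) = length xs \<Longrightarrow> Eof D = set xs"
proof -
  assume a: "sorted_wrt (<) xs" "set xs \<subseteq> Eof D" "finite D" "card (Eof D) = length xs"
  have "distinct xs" using a(1) by (simp add: strict_sorted_iff)
  hence "card (set xs) = length xs" by (simp add: distinct_card)
  moreover have "finite (Eof D)" using a by (simp add: Eof_def)
  ultimately show ?thesis using a by (metis card_subset_eq)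
qed

lemma domino_list:
  assumes "sorted_wrt (<) [a, Suc a, b, Suc b, c, Suc c, d, Suc d]"
  shows "finite {a,b,c,d} \<and> set [a, Suc a, b, Suc b, c, Suc c, d, Suc d] = {a,b,c,d} \<union> Suc ` {a,b,c,d}
    \<and> {a,b,c,d} \<inter> Suc ` {a,b,c,d} = {}"
  using assms by auto

definition Dom :: "nat set \<Rightarrow> bool" where
  "Dom E \<longleftrightarrow> (\<exists>S0. finite S0 \<and> E = S0 \<union> Suc ` S0 \<and> S0 \<inter> Suc ` S0 = {})"

lemma Dom_list: "sorted_wrt (<) [a, Suc a, b, Suc b, c, Suc c, d, Suc d] \<Longrightarrow>
   E = set [a, Suc a, b, Suc b, c, Suc c, d, Suc d] \<Longrightarrow> Dom E"
  unfolding Dom_def by (drule domino_list) blast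

lemma domino_sorted:
  assumes "2 \<le> x" "x \<le> y" "y \<le> z" "x+y+z = 2*k" "9 \<le> k"
    and c8: "card (Eof (D3 x y z)) = 8" and nC: "\<not> Csh (x+y+z) (D3 x y z)" and nB: "\<not> Bsh (x+y+z) (D3 x y z)"
    and nA: "\<not> Ash (x+y+z) (D3 x y z)" and nk: "k \<notin> D3 x y z"
  shows "Dom (Eof (D3 x y z))"
proof -
  let ?D = "D3 x y z"
  have sD: "\<And>u. u \<in> ?D \<Longrightarrow> Suc u \<in> Eof ?D" by (simp add: Eof_def)
  from order_cases[OF assms(1-3)] show ?thesis
  proof cases
    case 1
    have "Suc z < x+y" using 1(3) assms(4) by presburger
    hence E: "Eof ?D = set [x, y, z, Suc z, x+y, x+z, y+z, Suc (y+z)]"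
      by (intro eq_list) (use 1 assms c8 in \<open>simp_all add: Eof_def D3_def\<close>)
    have "Suc x \<in> Eof ?D" by (rule sD) (simp add: D3_def)
    hence y: "y = Suc x" using 1 \<open>Suc z < x+y\<close> unfolding E by auto
    have "Suc y \<in> Eof ?D" by (rule sD) (simp add: D3_def)
    hence z: "z = Suc y" using 1 \<open>Suc z < x+y\<close> unfolding E by auto
    show ?thesis
      by (rule Dom_list[where a=x and b=z and c="x+y" and d="y+z"]) (use 1 \<open>Suc z < x+y\<close> y z E in simp_all)
  next
    case 2
    have "z = k" using 2 assms(4) by linarith
    thus ?thesis using nk by (simp add: D3_def)
  next
    case 3
    have "Suc (x+y) < z" using 3(2) assms(4) by presburger
    hence E: "Eof ?D = set [x, y, x+y, Suc(x+y), z, x+z, y+z, Suc (y+z)]"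
      by (intro eq_list) (use 3 assms c8 in \<open>simp_all add: Eof_def D3_def\<close>)
    have "Suc y \<in> Eof ?D" by (rule sD) (simp add: D3_def)
    hence False using 3 \<open>Suc (x+y) < z\<close> assms(1) unfolding E by auto
    thus ?thesis ..
  next
    case 4
    show ?thesis
    proof (cases "Suc x = y")
      case False
      have E: "Eof ?D = set [x, Suc x, y, Suc y, x+y, Suc(x+y), y+z, Suc (y+z)]"
        by (intro eq_list) (use 4 False assms c8 in \<open>simp_all add: Eof_def D3_def\<close>)
      show ?thesis
        by (rule Dom_list[OF _ E]) (use 4 False assms in simp)
    next
      case True
      have "Ash (x+y+z) ?D" unfolding Ash_def D3_def using 4 True by auto
      thus ?thesis using nA by simp
    qed
  next
    case 5
    show ?thesis
    proof (cases "z = Suc x")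
      case False
      have "Suc z < x+y" using 5(3) assms(4) by presburger
      have E: "Eof ?D = set [x, Suc x, z, Suc z, x+y, Suc(x+y), y+z, Suc (y+z)]"
        by (intro eq_list) (use 5 False \<open>Suc z < x+y\<close> assms c8 in \<open>simp_all add: Eof_def D3_def\<close>)
      show ?thesis
        by (rule Dom_list[OF _ E]) (use 5 False \<open>Suc z < x+y\<close> assms in simp)
    next
      case True
      have "Ash (x+y+z) ?D" unfolding Ash_def D3_def using 5 True by auto
      thus ?thesis using nA by simp
    qed
  next
    case 6
    have "Bsh (x+y+z) ?D" unfolding Bsh_def D3_def using 6
      by (intro exI[of _ x]) (auto simp: insert_commute)
    thus ?thesis using nB by simp
  next
    case 7
    have "Suc (x+y) < z" using 7(2) assms(4) by presburger
    have E: "Eof ?D = set [x, Suc x, x+y, Suc(x+y), z, Suc z, y+z, Suc (y+z)]"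
      by (intro eq_list) (use 7 \<open>Suc (x+y) < z\<close> assms c8 in \<open>simp_all add: Eof_def D3_def\<close>)
    show ?thesis
      by (rule Dom_list[OF _ E]) (use 7 \<open>Suc (x+y) < z\<close> assms in simp)
  next
    case 8
    have "Csh (x+y+z) ?D" unfolding Csh_def D3_def using 8
      by (intro exI[of _ x]) (auto simp: insert_commute)
    thus ?thesis using nC by simp
  qed
qed



lemma D3_perms: "D3 x y z = D3 y x z" "D3 x y z = D3 x z y" "D3 x y z = D3 z y x"
    "D3 x y z = D3 y z x" "D3 x y z = D3 z x y"
  by (auto simp: D3_def add.commute)

lemma sort3:
  assumes "2 \<le> x" "2 \<le> y" "2 \<le> z"
  obtains a b c where "2 \<le> a" "a \<le> b" "b \<le> c" "D3 a b c = D3 x y z" "a+b+c = x+y+z"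
proof -
  consider "x \<le> y" "y \<le> z" | "x \<le> z" "z \<le> y" | "y \<le> x" "x \<le> z" | "y \<le> z" "z \<le> x"
    | "z \<le> x" "x \<le> y" | "z \<le> y" "y \<le> x" by linarith
  then show ?thesis
  proof cases
    case 1 show ?thesis by (rule that[of x y z]) (use 1 assms in auto)
  next
    case 2 show ?thesis by (rule that[of x z y]) (use 2 assms D3_perms(2) in auto)
  next
    case 3 show ?thesis by (rule that[of y x z]) (use 3 assms D3_perms(1) in auto)
  next
    case 4 show ?thesis by (rule that[of y z x]) (use 4 assms D3_perms(5) in auto)
  next
    case 5 show ?thesis by (rule that[of z x y]) (use 5 assms D3_perms(4) in auto)
  next
    case 6 show ?thesis by (rule that[of z y x]) (use 6 assms D3_perms(3) in auto)
  qed
qed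

lemma tri_gen:
  assumes "2 \<le> x" "2 \<le> y" "2 \<le> z" "x+y+z = 2*k" "9 \<le> k"
  shows "8 \<le> card (Eof (D3 x y z)) \<or> Csh (x+y+z) (D3 x y z) \<or> Bsh (x+y+z) (D3 x y z)
     \<or> (Ash (x+y+z) (D3 x y z) \<and> 6 \<le> card (Eof (D3 x y z)))"
proof -
  obtain a b c where o: "2 \<le> a" "a \<le> b" "b \<le> c" "D3 a b c = D3 x y z" "a+b+c = x+y+z"
    using sort3[OF assms(1-3)] by blast
  show ?thesis using tri_sorted[OF o(1-3), of k] o(4,5) assms(4,5) by simp
qed

lemma dom_gen:
  assumes "2 \<le> x" "2 \<le> y" "2 \<le> z" "x+y+z = 2*k" "9 \<le> k"
    and "card (Eof (D3 x y z)) = 8" and "\<not> Csh (x+y+z) (D3 x y z)" and "\<not> Bsh (x+y+z) (D3 x y z)"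
    and "\<not> Ash (x+y+z) (D3 x y z)" and "k \<notin> D3 x y z"
  shows "Dom (Eof (D3 x y z))"
proof -
  obtain a b c where o: "2 \<le> a" "a \<le> b" "b \<le> c" "D3 a b c = D3 x y z" "a+b+c = x+y+z"
    using sort3[OF assms(1-3)] by blast
  show ?thesis using domino_sorted[OF o(1-3), of k] o(4,5) assms(4-) by simp
qed

lemma Csh_E: "Csh L D \<Longrightarrow> 18 \<le> L \<Longrightarrow> \<exists>u. 3*u = L \<and> Eof D = {u, Suc u, 2*u, Suc (2*u)} \<and> D = {u, 2*u}"
  unfolding Csh_def Eof_def by auto

lemma Csh_card: "Csh L D \<Longrightarrow> 18 \<le> L \<Longrightarrow> card (Eof D) = 4"
proof -
  assume a: "Csh L D" "18 \<le> L"
  then obtain u where u: "3*u = L" "Eof D = {u, Suc u, 2*u, Suc (2*u)}" using Csh_E by blast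
  have "Eof D = set [u, Suc u, 2*u, Suc (2*u)]" using u by simp
  moreover have "distinct [u, Suc u, 2*u, Suc (2*u)]" using u a by simp
  ultimately show ?thesis by (simp only: distinct_card) simp
qed

lemma Bsh_E: "Bsh L D \<Longrightarrow> \<exists>u. 4*u = L \<and> Eof D = {u, Suc u, 2*u, Suc (2*u), 3*u, Suc (3*u)} \<and> D = {u, 2*u, 3*u}"
  unfolding Bsh_def Eof_def by auto

lemma Bsh_card: "Bsh L D \<Longrightarrow> 18 \<le> L \<Longrightarrow> card (Eof D) = 6"
proof -
  assume a: "Bsh L D" "18 \<le> L"
  then obtain u where u: "4*u = L" "Eof D = {u, Suc u, 2*u, Suc (2*u), 3*u, Suc (3*u)}" using Bsh_E by blast
  have "Eof D = set [u, Suc u, 2*u, Suc (2*u), 3*u, Suc (3*u)]" using u by simp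
  moreover have "distinct [u, Suc u, 2*u, Suc (2*u), 3*u, Suc (3*u)]" using u a by simp
  ultimately show ?thesis by (simp only: distinct_card) simp
qed

lemma modA: "(v::nat) \<le> u \<Longrightarrow> u < L \<Longrightarrow> (u + L - v) mod L = u - v"
proof -
  assume "v \<le> u" "u < L"
  hence e: "u + L - v = (u - v) + L" by simp
  have "(u + L - v) mod L = ((u - v) + L) mod L" by (simp only: e)
  also have "\<dots> = (u - v) mod L" by (rule mod_add_self2)
  also have "\<dots> = u - v" using \<open>u < L\<close> by (intro mod_less) linarith
  finally show ?thesis .
qed
lemma modB: "(u::nat) < v \<Longrightarrow> v < L \<Longrightarrow> (u + L - v) mod L = u + L - v"
proof -
  assume "u < v" "v < L"
  hence "u + L - v < L" by linarith
  thus ?thesis by (rule mod_less)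
qed

lemma dset_img: "dset L I = (\<lambda>(u,v). (u + L - v) mod L) ` (I \<times> I)"
  unfolding dset_def by auto

lemma dset_sorted:
  assumes "a < b" "b < c" "c < L"
  shows "dset L {a,b,c} = insert 0 (D3 (b-a) (c-b) (L-(c-a)))"
proof -
  have "dset L {a,b,c} = {(a + L - a) mod L, (a + L - b) mod L, (a + L - c) mod L,
    (b + L - a) mod L, (b + L - b) mod L, (b + L - c) mod L, (c + L - a) mod L, (c + L - b) mod L, (c + L - c) mod L}"
    unfolding dset_img by (simp add: insert_commute)
  moreover have "(a + L - a) mod L = 0" "(b + L - b) mod L = 0" "(c + L - c) mod L = 0" by simp_all
  moreover have "(b + L - a) mod L = b - a" "(c + L - a) mod L = c - a" "(c + L - b) mod L = c - b"
    using assms by (simp_all add: modA)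
  moreover have "(a + L - b) mod L = a + L - b" "(a + L - c) mod L = a + L - c" "(b + L - c) mod L = b + L - c"
    using assms by (simp_all add: modB)
  ultimately have "dset L {a,b,c} = {0, a+L-b, a+L-c, b-a, b+L-c, c-a, c-b}"
    by (simp add: insert_commute)
  also have "\<dots> = insert 0 (D3 (b-a) (c-b) (L-(c-a)))"
  proof -
    have e0: "L - (c-a) = a+L-c" using assms by auto
    have e: "c - b + (a+L-c) = a+L-b" "b - a + (a+L-c) = b+L-c" "b - a + (c - b) = c - a"
      using assms by auto
    show ?thesis unfolding e0 D3_def e by (simp add: insert_commute)
  qed
  finally show ?thesis .
qed

lemma sort3set:
  fixes p q r :: nat
  assumes "p \<noteq> q" "q \<noteq> r" "p \<noteq> r"
  shows "\<exists>a b c. a < b \<and> b < c \<and> {p,q,r} = {a,b,c}"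
proof -
  have s: "{p,q,r} = {q,p,r}" "{p,q,r} = {p,r,q}" "{p,q,r} = {r,q,p}" "{p,q,r} = {q,r,p}" "{p,q,r} = {r,p,q}"
    by auto
  consider "p < q" "q < r" | "p < r" "r < q" | "q < p" "p < r" | "q < r" "r < p" | "r < p" "p < q" | "r < q" "q < p"
    using assms by (metis linorder_neqE_nat less_trans)
  then show ?thesis
  proof cases
    case 1 then show ?thesis by blast
  next
    case 2 then show ?thesis using s(2) by blast
  next
    case 3 then show ?thesis using s(1) by blast
  next
    case 4 then show ?thesis using s(4) by blast
  next
    case 5 then show ?thesis using s(5) by blast
  next
    case 6 then show ?thesis using s(3) by blast
  qed
qed

lemma codeword_tri:
  assumes "I \<in> Pset L 3"
  shows "\<exists>x y z. 1 \<le> x \<and> 1 \<le> y \<and> 1 \<le> z \<and> x+y+z = L \<and> dset L I = insert 0 (D3 x y z)"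
proof -
  have I: "I \<subseteq> {0..<L}" "card I = 3" using assms by (auto simp: Pset_def)
  then obtain p q r where pqr: "I = {p,q,r}" "p \<noteq> q" "q \<noteq> r" "p \<noteq> r" by (auto simp: card_3_iff)
  obtain a b c where abc: "a < b" "b < c" "I = {a,b,c}" using sort3set[OF pqr(2-4)] pqr(1) by blast
  have "c < L" using I abc by auto
  have d: "dset L I = insert 0 (D3 (b-a) (c-b) (L-(c-a)))" using dset_sorted[OF abc(1,2) \<open>c<L\<close>] abc(3) by simp
  have "1 \<le> b-a" "1 \<le> c-b" "1 \<le> L-(c-a)" "(b-a) + (c-b) + (L-(c-a)) = L" using abc \<open>c < L\<close> by auto
  thus ?thesis using d by blast
qed



lemma Pset_finite: "finite (Pset L w)"
proof -
  have "Pset L w \<subseteq> Pow {0..<L}" by (auto simp: Pset_def)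
  thus ?thesis by (rule finite_subset) simp
qed

lemma zero_dset: "J \<in> Pset L 3 \<Longrightarrow> 0 \<in> dset L J"
proof -
  assume "J \<in> Pset L 3"
  hence "card J = 3" by (simp add: Pset_def)
  hence "J \<noteq> {}" by auto
  then obtain a where "a \<in> J" by blast
  hence "(a + L - a) mod L \<in> dset L J" unfolding dset_def by blast
  thus ?thesis by simp
qed

lemma scac_pair:
  assumes "is_SCAC L 3 C" "I \<in> C" "J \<in> C" "I \<noteq> J"
  shows "(dstar L I \<union> (\<lambda>x. (x + 1) mod L) ` dstar L I
                   \<union> (\<lambda>x. (x + L - 1) mod L) ` dstar L I) \<inter> dset L J = {}"
  using assms unfolding is_SCAC_def by blast

lemma codeword_facts:
  assumes "is_SCAC L 3 C" "I \<in> C" "J \<in> C" "I \<noteq> J"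
  shows "\<exists>x y z. 2 \<le> x \<and> 2 \<le> y \<and> 2 \<le> z \<and> x+y+z = L \<and> dstar L I = D3 x y z"
proof -
  have IP: "I \<in> Pset L 3" and JP: "J \<in> Pset L 3" using assms by (auto simp: is_SCAC_def)
  obtain x y z where xyz: "1 \<le> x" "1 \<le> y" "1 \<le> z" "x+y+z = L" "dset L I = insert 0 (D3 x y z)"
    using codeword_tri[OF IP] by blast
  have "0 \<notin> D3 x y z" using xyz by (auto simp: D3_def)
  hence ds: "dstar L I = D3 x y z" using xyz(5) by (auto simp: dstar_def)
  have "1 \<notin> dstar L I"
  proof
    assume "1 \<in> dstar L I"
    hence "(1 + L - 1) mod L \<in> (\<lambda>x. (x + L - 1) mod L) ` dstar L I" by blast
    hence "0 \<in> (\<lambda>x. (x + L - 1) mod L) ` dstar L I" by simp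
    with zero_dset[OF JP] scac_pair[OF assms] show False by blast
  qed
  hence n1: "x \<noteq> 1" "y \<noteq> 1" "z \<noteq> 1" using ds by (auto simp: D3_def)
  have "2 \<le> x" "2 \<le> y" "2 \<le> z" using xyz(1-3) n1 by linarith+
  thus ?thesis using xyz(4) ds by blast
qed

lemma D3_range: "2 \<le> x \<Longrightarrow> 2 \<le> y \<Longrightarrow> 2 \<le> z \<Longrightarrow> u \<in> D3 x y z \<Longrightarrow> 2 \<le> u \<and> u + 2 \<le> x+y+z"
  by (auto simp: D3_def)

lemma E_disj:
  assumes "is_SCAC L 3 C" "I \<in> C" "J \<in> C" "I \<noteq> J"
  shows "Eof (dstar L I) \<inter> Eof (dstar L J) = {}"
proof -
  obtain x y z where I: "2 \<le> x" "2 \<le> y" "2 \<le> z" "x+y+z = L" "dstar L I = D3 x y z"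
    using codeword_facts[OF assms] by blast
  obtain x' y' z' where J: "2 \<le> x'" "2 \<le> y'" "2 \<le> z'" "x'+y'+z' = L" "dstar L J = D3 x' y' z'"
    using codeword_facts[OF assms(1,3,2)] assms(4) by metis
  have rI: "\<And>u. u \<in> dstar L I \<Longrightarrow> 2 \<le> u \<and> u + 2 \<le> L" using D3_range I by metis
  have rJ: "\<And>u. u \<in> dstar L J \<Longrightarrow> 2 \<le> u \<and> u + 2 \<le> L" using D3_range J by metis
  have P: "(dstar L I \<union> (\<lambda>x. (x + 1) mod L) ` dstar L I
                   \<union> (\<lambda>x. (x + L - 1) mod L) ` dstar L I) \<inter> dset L J = {}"
    using scac_pair[OF assms] .
  have P': "(dstar L J \<union> (\<lambda>x. (x + 1) mod L) ` dstar L J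
                   \<union> (\<lambda>x. (x + L - 1) mod L) ` dstar L J) \<inter> dset L I = {}"
    using scac_pair[OF assms(1,3,2)] assms(4) by metis
  have sub: "dstar L J \<subseteq> dset L J" by (auto simp: dstar_def)
  have a: "\<And>u. u \<in> dstar L I \<Longrightarrow> u \<notin> dstar L J" using P sub by blast
  have b: "\<And>u. u \<in> dstar L I \<Longrightarrow> Suc u \<notin> dstar L J"
  proof
    fix u assume u: "u \<in> dstar L I" "Suc u \<in> dstar L J"
    have "(u + 1) mod L = Suc u" using rI[OF u(1)] by simp
    hence "Suc u \<in> (\<lambda>x. (x + 1) mod L) ` dstar L I" using u(1) by (metis image_eqI)
    thus False using P u(2) sub by blast
  qed
  have c: "\<And>u. u \<in> dstar L J \<Longrightarrow> Suc u \<notin> dstar L I"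
  proof
    fix u assume u: "u \<in> dstar L J" "Suc u \<in> dstar L I"
    have "(Suc u + L - 1) mod L = u" using rJ[OF u(1)] by simp
    hence "u = (\<lambda>x. (x + L - 1) mod L) (Suc u)" by simp
    hence "u \<in> (\<lambda>x. (x + L - 1) mod L) ` dstar L I" using u(2) by (rule image_eqI)
    thus False using P u(1) sub by blast
  qed
  show ?thesis unfolding Eof_def using a b c by blast
qed

lemma E_range:
  assumes "is_SCAC L 3 C" "I \<in> C" "J \<in> C" "I \<noteq> J"
  shows "Eof (dstar L I) \<subseteq> {2..<L}"
proof -
  obtain x y z where I: "2 \<le> x" "2 \<le> y" "2 \<le> z" "x+y+z = L" "dstar L I = D3 x y z"
    using codeword_facts[OF assms] by blast
  have rI: "\<And>u. u \<in> dstar L I \<Longrightarrow> 2 \<le> u \<and> u + 2 \<le> L" using D3_range I by metis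
  show ?thesis unfolding Eof_def using rI by force
qed



lemma domino_even:
  assumes "finite S0" "S0 \<inter> Suc ` S0 = {}" "\<forall>s\<in>S0. (s \<in> Q \<longleftrightarrow> Suc s \<in> Q)"
  shows "card ((S0 \<union> Suc ` S0) \<inter> Q) = 2 * card (S0 \<inter> Q)"
proof -
  have e: "(S0 \<union> Suc ` S0) \<inter> Q = (S0 \<inter> Q) \<union> Suc ` (S0 \<inter> Q)" using assms(3) by auto
  have d: "(S0 \<inter> Q) \<inter> Suc ` (S0 \<inter> Q) = {}" using assms(2) by auto
  have "card (Suc ` (S0 \<inter> Q)) = card (S0 \<inter> Q)" by (rule card_image) simp
  thus ?thesis unfolding e using card_Un_disjoint[OF _ _ d] assms(1) by simp
qed

lemma sum_eq_each:
  fixes f :: "'a \<Rightarrow> nat"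
  assumes "finite A" "\<And>x. x \<in> A \<Longrightarrow> c \<le> f x" "sum f A \<le> card A * c"
  shows "\<And>x. x \<in> A \<Longrightarrow> f x = c"
proof -
  have "(\<Sum>x\<in>A. f x - c) = sum f A - (\<Sum>x\<in>A. c)" by (rule sum_subtractf_nat) (use assms in auto)
  also have "\<dots> = 0" using assms(3) by simp
  finally have "\<forall>x\<in>A. f x - c = 0" using assms(1) by simp
  thus "\<And>x. x \<in> A \<Longrightarrow> f x = c" using assms(2) by (metis diff_is_0_eq le_antisym)
qed


lemma fin_arith:
  fixes L M :: nat
  assumes k: "8*M + 2 \<le> L + ((if 3 dvd L then 4 else 2) + (if 4 dvd L then 2 else 0))" "18 \<le> L" "even L"
    and ns: "\<not> (L mod 8 = 4 \<and> 3 dvd L \<and> L + 4 \<le> 8*M)"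
  shows "(L mod 8 = 0 \<longrightarrow> M \<le> L div 8)
       \<and> (L mod 8 = 4 \<longrightarrow> M \<le> (L - 4) div 8)
       \<and> (L mod 24 = 6 \<longrightarrow> M \<le> (L + 2) div 8)
       \<and> (L mod 24 \<in> {2, 10, 18} \<longrightarrow> M \<le> (L - 2) div 8)
       \<and> (L mod 24 \<in> {14, 22} \<longrightarrow> M \<le> (L - 6) div 8)"
proof -
  define q where "q = L div 24"
  define r where "r = L mod 24"
  have L: "L = 24*q + r" unfolding q_def r_def by simp
  have r24: "r < 24" unfolding r_def by simp
  have "even r" using assms(3) L by simp
  have d3: "3 dvd L \<longleftrightarrow> 3 dvd r" unfolding L by presburger
  have d4: "4 dvd L \<longleftrightarrow> 4 dvd r" unfolding L by presburger
  have m8: "L mod 8 = r mod 8" unfolding L by presburger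
  have rc: "r \<in> {0,2,4,6,8,10,12,14,16,18,20,22}" using r24 \<open>even r\<close>
    by (auto simp: set_eq_iff) presburger
  show ?thesis
    using rc k ns unfolding m8 d3 d4 r_def[symmetric] unfolding L
    by (elim insertE emptyE; simp; presburger)
qed


lemma setup_facts:
  assumes scac: "is_SCAC L 3 C" and M2: "2 \<le> card C"
  shows "finite C"
    and "\<And>I. I \<in> C \<Longrightarrow> \<exists>x y z. 2 \<le> x \<and> 2 \<le> y \<and> 2 \<le> z \<and> x+y+z = L \<and> dstar L I = D3 x y z"
    and "\<And>I J. I \<in> C \<Longrightarrow> J \<in> C \<Longrightarrow> I \<noteq> J \<Longrightarrow> Eof (dstar L I) \<inter> Eof (dstar L J) = {}"
    and "\<And>I. I \<in> C \<Longrightarrow> Eof (dstar L I) \<subseteq> {2..<L}"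
proof -
  show fin: "finite C" using scac Pset_finite unfolding is_SCAC_def by (metis finite_subset)
  have oth: "\<And>I. I \<in> C \<Longrightarrow> \<exists>J\<in>C. J \<noteq> I"
  proof (rule ccontr)
    fix I assume "I \<in> C" "\<not> (\<exists>J\<in>C. J \<noteq> I)"
    hence "C = {I}" by blast
    thus False using M2 by simp
  qed
  show "\<And>I. I \<in> C \<Longrightarrow> \<exists>x y z. 2 \<le> x \<and> 2 \<le> y \<and> 2 \<le> z \<and> x+y+z = L \<and> dstar L I = D3 x y z"
    using oth codeword_facts[OF scac] by metis
  show "\<And>I J. I \<in> C \<Longrightarrow> J \<in> C \<Longrightarrow> I \<noteq> J \<Longrightarrow> Eof (dstar L I) \<inter> Eof (dstar L J) = {}"
    using E_disj[OF scac] by blast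
  show "\<And>I. I \<in> C \<Longrightarrow> Eof (dstar L I) \<subseteq> {2..<L}"
    using oth E_range[OF scac] by metis
qed

lemma uniq:
  assumes fin: "finite C"
    and disj: "\<And>I J. I \<in> C \<Longrightarrow> J \<in> C \<Longrightarrow> I \<noteq> J \<Longrightarrow> Eof (D I) \<inter> Eof (D J) = {}"
    and P: "\<And>I. I \<in> C \<Longrightarrow> P I \<Longrightarrow> \<exists>u\<in>D I. Q u"
    and Q: "\<And>u v. Q u \<Longrightarrow> Q v \<Longrightarrow> u = v"
  shows "card (C \<inter> {I. P I}) \<le> 1"
proof -
  have "\<forall>I\<in>C \<inter> {I. P I}. \<forall>J\<in>C \<inter> {I. P I}. I = J"
  proof (intro ballI, rule ccontr)
    fix I J assume a: "I \<in> C \<inter> {I. P I}" "J \<in> C \<inter> {I. P I}" "I \<noteq> J"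
    obtain u where u: "u \<in> D I" "Q u" using P a(1) by blast
    obtain v where v: "v \<in> D J" "Q v" using P a(2) by blast
    have "u = v" using Q u v by blast
    hence "u \<in> Eof (D I) \<inter> Eof (D J)" using u v by (simp add: Eof_def)
    thus False using disj a by blast
  qed
  thus ?thesis using card_le_Suc0_iff_eq[of "C \<inter> {I. P I}"] fin by simp
qed

lemma main_count:
  assumes scac: "is_SCAC L 3 C" and M2: "2 \<le> card C" and L18: "18 \<le> L" and ev: "even L"
  shows "8 * card C + 2 \<le> L + ((if 3 dvd L then 4 else 2) + (if 4 dvd L then 2 else 0))
     \<and> \<not> (L mod 8 = 4 \<and> 3 dvd L \<and> L + 4 \<le> 8 * card C)"
proof -
  note sf = setup_facts[OF scac M2]
  have fin: "finite C" by (rule sf(1))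
  define D where "D = (\<lambda>I. dstar L I)"
  define E where "E = (\<lambda>I. Eof (D I))"
  have tri: "\<And>I. I \<in> C \<Longrightarrow> \<exists>x y z. 2 \<le> x \<and> 2 \<le> y \<and> 2 \<le> z \<and> x+y+z = L \<and> D I = D3 x y z"
    unfolding D_def by (rule sf(2))
  have disj: "\<And>I J. I \<in> C \<Longrightarrow> J \<in> C \<Longrightarrow> I \<noteq> J \<Longrightarrow> E I \<inter> E J = {}"
    unfolding E_def D_def by (rule sf(3))
  have rng: "\<And>I. I \<in> C \<Longrightarrow> E I \<subseteq> {2..<L}" unfolding E_def D_def by (rule sf(4))
  obtain k where k: "L = 2*k" using ev by blast
  have k9: "9 \<le> k" using k L18 by simp
  have finE: "\<And>I. I \<in> C \<Longrightarrow> finite (E I)"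
  proof -
    fix I assume "I \<in> C"
    then obtain x y z where "D I = D3 x y z" using tri by blast
    thus "finite (E I)" by (simp add: E_def Eof_def)
  qed
  have cU: "card (\<Union>(E ` C)) = (\<Sum>I\<in>C. card (E I))"
    by (rule card_UN_disjoint) (use fin finE disj in auto)
  have Usub: "\<Union>(E ` C) \<subseteq> {2..<L}" using rng by blast
  have S1: "(\<Sum>I\<in>C. card (E I)) \<le> L - 2"
    using card_mono[OF _ Usub] cU by simp
  define df where "df = (\<lambda>I. if Csh L (D I) then 4 else if Bsh L (D I) then 2 else if Ash L (D I) then (2::nat) else 0)"
  have each: "\<And>I. I \<in> C \<Longrightarrow> 8 \<le> card (E I) + df I"
  proof -
    fix I assume I: "I \<in> C"
    then obtain x y z where xyz: "2 \<le> x" "2 \<le> y" "2 \<le> z" "x+y+z = L" "D I = D3 x y z" using tri by blast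
    have t: "8 \<le> card (E I) \<or> Csh L (D I) \<or> Bsh L (D I) \<or> (Ash L (D I) \<and> 6 \<le> card (E I))"
      using tri_gen[OF xyz(1-3), of k] xyz(4,5) k k9 unfolding E_def by simp
    show "8 \<le> card (E I) + df I"
    proof (cases "Csh L (D I)")
      case True
      thus ?thesis using Csh_card[OF True L18] by (simp add: df_def E_def)
    next
      case nC: False
      show ?thesis
      proof (cases "Bsh L (D I)")
        case True
        thus ?thesis using Bsh_card[OF True L18] nC by (simp add: df_def E_def)
      next
        case False
        thus ?thesis using t nC by (auto simp: df_def)
      qed
    qed
  qed
  define nC where "nC = card (C \<inter> {I. Csh L (D I)})"
  define nB where "nB = card (C \<inter> {I. Bsh L (D I)})"
  define nA where "nA = card (C \<inter> {I. Ash L (D I)})"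
  have disjD: "\<And>I J. I \<in> C \<Longrightarrow> J \<in> C \<Longrightarrow> I \<noteq> J \<Longrightarrow> Eof (D I) \<inter> Eof (D J) = {}"
    using disj unfolding E_def .
  have nC1: "nC \<le> 1" unfolding nC_def
    by (rule uniq[OF fin disjD, where Q="\<lambda>u. 3*u = L"]) (auto simp: Csh_def)
  have nB1: "nB \<le> 1" unfolding nB_def
    by (rule uniq[OF fin disjD, where Q="\<lambda>u. 4*u = L"]) (auto simp: Bsh_def)
  have nA1: "nA \<le> 1" unfolding nA_def
    by (rule uniq[OF fin disjD, where Q="\<lambda>u. 3*u = L+1 \<or> 3*u+1 = L"]) (auto simp: Ash_def)
  have nCd: "1 \<le> nC \<Longrightarrow> 3 dvd L"
  proof -
    assume "1 \<le> nC"
    hence "C \<inter> {I. Csh L (D I)} \<noteq> {}" unfolding nC_def by auto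
    then obtain I where "Csh L (D I)" by blast
    thus "3 dvd L" unfolding Csh_def by auto
  qed
  have nBd: "1 \<le> nB \<Longrightarrow> 4 dvd L"
  proof -
    assume "1 \<le> nB"
    hence "C \<inter> {I. Bsh L (D I)} \<noteq> {}" unfolding nB_def by auto
    then obtain I where "Bsh L (D I)" by blast
    thus "4 dvd L" unfolding Bsh_def by auto
  qed
  have nAd: "1 \<le> nA \<Longrightarrow> \<not> 3 dvd L"
  proof -
    assume "1 \<le> nA"
    hence "C \<inter> {I. Ash L (D I)} \<noteq> {}" unfolding nA_def by auto
    then obtain I where "Ash L (D I)" by blast
    then obtain u where "3*u = L+1 \<or> 3*u+1 = L" unfolding Ash_def by auto
    thus "\<not> 3 dvd L" by presburger
  qed
  have dfle: "\<And>I. df I \<le> 4 * of_bool (Csh L (D I)) + 2 * of_bool (Bsh L (D I)) + 2 * of_bool (Ash L (D I))"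
    by (simp add: df_def)
  have Sdf: "(\<Sum>I\<in>C. df I) \<le> 4*nC + 2*nB + 2*nA"
  proof -
    have "(\<Sum>I\<in>C. df I) \<le> (\<Sum>I\<in>C. 4 * of_bool (Csh L (D I)) + 2 * of_bool (Bsh L (D I)) + 2 * of_bool (Ash L (D I)))"
      by (rule sum_mono) (rule dfle)
    also have "\<dots> = 4*nC + 2*nB + 2*nA"
      using fin by (simp add: sum.distrib sum_distrib_left[symmetric] nC_def nB_def nA_def)
    finally show ?thesis .
  qed
  have tot: "8 * card C \<le> (\<Sum>I\<in>C. card (E I) + df I)"
  proof -
    have "8 * card C = (\<Sum>I\<in>C. (8::nat))" by simp
    also have "\<dots> \<le> (\<Sum>I\<in>C. card (E I) + df I)" by (rule sum_mono) (rule each)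
    finally show ?thesis .
  qed
  have sumsplit: "(\<Sum>I\<in>C. card (E I) + df I) = (\<Sum>I\<in>C. card (E I)) + (\<Sum>I\<in>C. df I)"
    by (rule sum.distrib)
  have tb: "4*nC + 2*nB + 2*nA \<le> (if 3 dvd L then 4 else 2) + (if 4 dvd L then 2 else 0)"
  proof -
    have "nB = 0 \<or> nB = 1" "nA = 0 \<or> nA = 1" "nC = 0 \<or> nC = 1" using nA1 nB1 nC1 by auto
    thus ?thesis using nAd nBd nCd by auto
  qed
  have part1: "8 * card C + 2 \<le> L + ((if 3 dvd L then 4 else 2) + (if 4 dvd L then 2 else 0))"
    using tot sumsplit S1 Sdf tb L18 by linarith
  have part2: "\<not> (L mod 8 = 4 \<and> 3 dvd L \<and> L + 4 \<le> 8 * card C)"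
  proof
    assume sp: "L mod 8 = 4 \<and> 3 dvd L \<and> L + 4 \<le> 8 * card C"
    have nA0: "nA = 0" using nAd sp by force
    have "nB = 0 \<or> nB = 1" "nC = 0 \<or> nC = 1" using nB1 nC1 by auto
    hence nBC: "nB = 1" "nC = 1" and S1eq: "(\<Sum>I\<in>C. card (E I)) = L - 2"
      and Seq: "(\<Sum>I\<in>C. card (E I) + df I) \<le> card C * 8"
      using tot sumsplit S1 Sdf nA0 sp L18 by auto
    have eq8: "\<And>I. I \<in> C \<Longrightarrow> card (E I) + df I = 8"
      by (rule sum_eq_each[OF fin _ Seq]) (rule each)
    have "C \<inter> {I. Bsh L (D I)} \<noteq> {}" using nBC unfolding nB_def by auto
    then obtain IB where IB: "IB \<in> C" "Bsh L (D IB)" by blast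
    obtain h where h: "4*h = L" "E IB = {h, Suc h, 2*h, Suc (2*h), 3*h, Suc (3*h)}" "D IB = {h, 2*h, 3*h}"
      using Bsh_E[OF IB(2)] unfolding E_def by blast
    have hodd: "odd h" using sp h(1) by presburger
    have "3 dvd h" using sp h(1) by presburger
    hence h9: "9 \<le> h" using hodd h(1) L18 by presburger
    have Ueq: "\<Union>(E ` C) = {2..<L}"
      by (rule card_subset_eq) (use Usub cU S1eq in auto)
    define Q where "Q = {h+2..<2*h}"
    have QU: "Q \<subseteq> \<Union>(E ` C)" unfolding Ueq Q_def using h(1) by auto
    have Qeq: "Q = \<Union>((\<lambda>I. E I \<inter> Q) ` C)" using QU by blast
    have cQ: "card Q = (\<Sum>I\<in>C. card (E I \<inter> Q))"
      by (subst Qeq, rule card_UN_disjoint) (use fin finE disj in auto)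
    have ev_each: "\<And>I. I \<in> C \<Longrightarrow> even (card (E I \<inter> Q))"
    proof -
      fix I assume I: "I \<in> C"
      show "even (card (E I \<inter> Q))"
      proof (cases "Bsh L (D I)")
        case True
        obtain u where u: "4*u = L" "E I = {u, Suc u, 2*u, Suc (2*u), 3*u, Suc (3*u)}"
          using Bsh_E[OF True] unfolding E_def by blast
        have "u = h" using u(1) h(1) by simp
        hence "E I \<inter> Q = {}" using u(2) h9 unfolding Q_def by auto
        thus ?thesis by simp
      next
        case nB: False
        show ?thesis
        proof (cases "Csh L (D I)")
          case True
          obtain u where u: "3*u = L" "E I = {u, Suc u, 2*u, Suc (2*u)}"
            using Csh_E[OF True L18] unfolding E_def by blast
          have "h + 2 \<le> u" "Suc u < 2*h" using u(1) h(1) h9 by linarith+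
          hence "E I \<inter> Q = {u, Suc u}" using u(2) unfolding Q_def by auto
          thus ?thesis by simp
        next
          case nC: False
          have nA: "\<not> Ash L (D I)"
          proof
            assume "Ash L (D I)"
            then obtain u where "3*u = L+1 \<or> 3*u+1 = L" unfolding Ash_def by blast
            thus False using sp by presburger
          qed
          have "df I = 0" using nA nB nC by (simp add: df_def)
          hence c8: "card (E I) = 8" using eq8[OF I] by simp
          have "I \<noteq> IB" using nB IB(2) by blast
          hence dIB: "E I \<inter> E IB = {}" using disj I IB(1) by blast
          obtain x y z where xyz: "2 \<le> x" "2 \<le> y" "2 \<le> z" "x+y+z = L" "D I = D3 x y z"
            using tri[OF I] by blast
          have "D I \<subseteq> E I" by (simp add: E_def Eof_def)
          hence "2*h \<notin> D I" using dIB h(2) by blast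
          have "Dom (E I)" unfolding E_def xyz(5)
            by (rule dom_gen[OF xyz(1-3), of "2*h"]) (use xyz h(1) h9 c8 nA nB nC \<open>2*h \<notin> D I\<close> in \<open>simp_all add: E_def\<close>)
          then obtain S0 where S0: "finite S0" "E I = S0 \<union> Suc ` S0" "S0 \<inter> Suc ` S0 = {}"
            unfolding Dom_def by blast
          have n1: "Suc h \<notin> E I" "2*h \<notin> E I" using dIB h(2) by blast+
          have bd: "\<forall>s\<in>S0. (s \<in> Q \<longleftrightarrow> Suc s \<in> Q)"
          proof
            fix s assume s: "s \<in> S0"
            have "s \<in> E I" "Suc s \<in> E I" using s S0(2) by blast+
            hence "s \<noteq> Suc h" "Suc s \<noteq> 2*h" using n1 by metis+
            thus "s \<in> Q \<longleftrightarrow> Suc s \<in> Q" unfolding Q_def by auto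
          qed
          have "card (E I \<inter> Q) = 2 * card (S0 \<inter> Q)"
            unfolding S0(2) by (rule domino_even[OF S0(1) S0(3) bd])
          thus ?thesis by simp
        qed
      qed
    qed
    have "even (card Q)" unfolding cQ by (rule dvd_sum) (rule ev_each)
    moreover have "card Q = h - 2" unfolding Q_def by simp
    ultimately show False using hodd h9 by presburger
  qed
  show ?thesis using part1 part2 by blast
qed



theorem mainTheorem8:
  fixes L :: nat
  assumes "L \<ge> 18" and "even L"
  shows "(L mod 8 = 0 \<longrightarrow> M_S L 3 \<le> L div 8)
       \<and> (L mod 8 = 4 \<longrightarrow> M_S L 3 \<le> (L - 4) div 8)
       \<and> (L mod 24 = 6 \<longrightarrow> M_S L 3 \<le> (L + 2) div 8)
       \<and> (L mod 24 \<in> {2, 10, 18} \<longrightarrow> M_S L 3 \<le> (L - 2) div 8)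
       \<and> (L mod 24 \<in> {14, 22} \<longrightarrow> M_S L 3 \<le> (L - 6) div 8)"
proof -
  let ?S = "{card C | C. is_SCAC L 3 C}"
  have "?S \<subseteq> {..card (Pset L 3)}"
  proof
    fix m assume "m \<in> ?S"
    then obtain C where "m = card C" "is_SCAC L 3 C" by blast
    hence "C \<subseteq> Pset L 3" by (simp add: is_SCAC_def)
    hence "card C \<le> card (Pset L 3)" by (rule card_mono[OF Pset_finite])
    thus "m \<in> {..card (Pset L 3)}" using \<open>m = card C\<close> by simp
  qed
  hence finS: "finite ?S" by (rule finite_subset) simp
  have "is_SCAC L 3 {}" by (simp add: is_SCAC_def)
  hence neS: "?S \<noteq> {}" by blast
  have "M_S L 3 \<in> ?S" unfolding M_S_def by (rule Max_in[OF finS neS])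
  then obtain C0 where C0: "M_S L 3 = card C0" "is_SCAC L 3 C0" by blast
  have key: "8 * card C0 + 2 \<le> L + ((if 3 dvd L then 4 else 2) + (if 4 dvd L then 2 else 0))
     \<and> \<not> (L mod 8 = 4 \<and> 3 dvd L \<and> L + 4 \<le> 8 * card C0)"
  proof (cases "2 \<le> card C0")
    case True
    thus ?thesis using main_count[OF C0(2) True assms(1,2)] by blast
  next
    case False
    hence "card C0 \<le> 1" by simp
    thus ?thesis using assms(1) by simp
  qed
  from key have k1: "8 * card C0 + 2 \<le> L + ((if 3 dvd L then 4 else 2) + (if 4 dvd L then 2 else 0))"
    and k2: "\<not> (L mod 8 = 4 \<and> 3 dvd L \<and> L + 4 \<le> 8 * card C0)" by blast+
  show ?thesis unfolding C0(1) by (rule fin_arith[OF k1 assms(1) assms(2) k2])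
qed


end
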